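(* Let $\mathbf L$ be a bounded lattice with canonical polarity $(X,\parallel,Y)$ and spaces $\mathfrak X=(X,\mathcal B)$, $\mathfrak Y=(Y,\mathcal C)$, where $\mathcal B=\{X_a:a\in L\}$ and $\mathcal C=\{Y^a:a\in L\}$. Then $\mathcal B$ is exactly the family of subsets of $X$ that are both compact-open in $\mathfrak X$ and Galois stable, and $\mathcal C$ is exactly the family of subsets of $Y$ that are compact-open in $\mathfrak Y$ and Galois co-stable. Moreover $\mathcal B$ and $\mathcal C$ are dually isomorphic bounded lattices (via $A\mapsto A'$, with $(X_a)'=Y^a$), $\mathcal B$ a sublattice of $\mathcal G(X)$ and $\mathcal C$ a sublattice of $\mathcal G(Y)$.
   Context: Canonical polarity of a bounded lattice $\mathbf L$: $X$ is the set of proper filters of $\mathbf L$, $Y$ the set of proper ideals, and $x\parallel y$ iff $x\cap y\neq\emptyset$. For $a\in L$: $X_a=\{x\in X:a\in x\}$, $Y^a=\{y\in Y:a\in y\}$. $\mathfrak X$ (resp. $\mathfrak Y$) is $X$ (resp. $Y$) with the topology generated by the basis $\mathcal B$ (resp. $\mathcal C$). For $U\subseteq X$, $U'=\{y\in Y:\forall x\in U\;x\parallel y\}$; for $V\subseteq Y$, $V'=\{x\in X:\forall y\in V\;x\parallel y\}$. Stable sets $A=A''\subseteq X$ form the complete lattice $\mathcal G(X)$ (meets = intersections, joins $(\bigcup A_j)''$); co-stable sets $B=B''\subseteq Y$ form $\mathcal G(Y)$. *)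

theory Defs
  imports "HOL-Analysis.Analysis"
begin

definition lat_filter :: "'a::bounded_lattice set \<Rightarrow> bool" where
  "lat_filter F \<longleftrightarrow> F \<noteq> {} \<and> (\<forall>a\<in>F. \<forall>b. a \<le> b \<longrightarrow> b \<in> F) \<and> (\<forall>a\<in>F. \<forall>b\<in>F. inf a b \<in> F)"

definition lat_ideal :: "'a::bounded_lattice set \<Rightarrow> bool" where
  "lat_ideal I \<longleftrightarrow> I \<noteq> {} \<and> (\<forall>a\<in>I. \<forall>b. b \<le> a \<longrightarrow> b \<in> I) \<and> (\<forall>a\<in>I. \<forall>b\<in>I. sup a b \<in> I)"

text \<open>X: proper filters; Y: proper ideals.\<close>
definition PFilt :: "'a::bounded_lattice set set" where
  "PFilt = {F. lat_filter F \<and> F \<noteq> UNIV}"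

definition PIdl :: "'a::bounded_lattice set set" where
  "PIdl = {I. lat_ideal I \<and> I \<noteq> UNIV}"

definition rel :: "'a set \<Rightarrow> 'a set \<Rightarrow> bool" where
  "rel x y \<longleftrightarrow> x \<inter> y \<noteq> {}"

definition Xa :: "'a::bounded_lattice \<Rightarrow> 'a set set" where
  "Xa a = {x \<in> PFilt. a \<in> x}"

definition Ya :: "'a::bounded_lattice \<Rightarrow> 'a set set" where
  "Ya a = {y \<in> PIdl. a \<in> y}"

definition primeX :: "'a::bounded_lattice set set \<Rightarrow> 'a set set" where
  "primeX U = {y \<in> PIdl. \<forall>x\<in>U. rel x y}"

definition primeY :: "'a::bounded_lattice set set \<Rightarrow> 'a set set" where
  "primeY V = {x \<in> PFilt. \<forall>y\<in>V. rel x y}"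

definition BX :: "'a::bounded_lattice set set set" where
  "BX = range Xa"

definition CY :: "'a::bounded_lattice set set set" where
  "CY = range Ya"

definition TopX :: "'a::bounded_lattice set topology" where
  "TopX = topology_generated_by BX"

definition TopY :: "'a::bounded_lattice set topology" where
  "TopY = topology_generated_by CY"

definition stableX :: "'a::bounded_lattice set set \<Rightarrow> bool" where
  "stableX A \<longleftrightarrow> A \<subseteq> PFilt \<and> primeY (primeX A) = A"

definition costableY :: "'a::bounded_lattice set set \<Rightarrow> bool" where
  "costableY B \<longleftrightarrow> B \<subseteq> PIdl \<and> primeX (primeY B) = B"

end

theory Submission
  imports Defs
begin

lemma filt_top: "x \<in> PFilt \<Longrightarrow> (top::'a::bounded_lattice) \<in> x"
  unfolding PFilt_def lat_filter_def by auto

lemma filt_bot: "x \<in> PFilt \<Longrightarrow> (bot::'a::bounded_lattice) \<notin> x"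
proof
  assume x: "x \<in> PFilt" and b: "bot \<in> x"
  then have "\<forall>c. c \<in> x" unfolding PFilt_def lat_filter_def by auto
  with x show False unfolding PFilt_def by auto
qed

lemma idl_bot: "y \<in> PIdl \<Longrightarrow> (bot::'a::bounded_lattice) \<in> y"
  unfolding PIdl_def lat_ideal_def by auto

lemma idl_top: "y \<in> PIdl \<Longrightarrow> (top::'a::bounded_lattice) \<notin> y"
proof
  assume y: "y \<in> PIdl" and b: "top \<in> y"
  then have "\<forall>c. c \<in> y" unfolding PIdl_def lat_ideal_def by auto
  with y show False unfolding PIdl_def by auto
qed

lemma princ_filt: "(a::'a::bounded_lattice) \<noteq> bot \<Longrightarrow> {b. a \<le> b} \<in> PFilt"
proof -
  assume a: "a \<noteq> bot"
  have "bot \<notin> {b. a \<le> b}" using a bot_unique by blast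
  then have "{b. a \<le> b} \<noteq> UNIV" by blast
  moreover have "lat_filter {b. a \<le> b}"
    unfolding lat_filter_def by (auto intro: order_trans)
  ultimately show ?thesis unfolding PFilt_def by blast
qed

lemma princ_idl: "(a::'a::bounded_lattice) \<noteq> top \<Longrightarrow> {b. b \<le> a} \<in> PIdl"
proof -
  assume a: "a \<noteq> top"
  have "top \<notin> {b. b \<le> a}" using a top_unique by blast
  then have "{b. b \<le> a} \<noteq> UNIV" by blast
  moreover have "lat_ideal {b. b \<le> a}"
    unfolding lat_ideal_def by (auto intro: order_trans)
  ultimately show ?thesis unfolding PIdl_def by blast
qed

lemma filt_up: "x \<in> PFilt \<Longrightarrow> a \<in> x \<Longrightarrow> a \<le> b \<Longrightarrow> b \<in> x"
  unfolding PFilt_def lat_filter_def by auto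

lemma idl_down: "y \<in> PIdl \<Longrightarrow> a \<in> y \<Longrightarrow> b \<le> a \<Longrightarrow> b \<in> y"
  unfolding PIdl_def lat_ideal_def by auto

lemma Xa_inf: "Xa (inf a b) = Xa a \<inter> Xa (b::'a::bounded_lattice)"
  unfolding Xa_def PFilt_def lat_filter_def by auto

lemma Ya_sup: "Ya (sup a b) = Ya a \<inter> Ya (b::'a::bounded_lattice)"
  unfolding Ya_def PIdl_def lat_ideal_def by auto

lemma Xa_top: "Xa (top::'a::bounded_lattice) = PFilt"
  unfolding Xa_def using filt_top by auto

lemma Ya_bot: "Ya (bot::'a::bounded_lattice) = PIdl"
  unfolding Ya_def using idl_bot by auto

lemma primeX_empty: "primeX {} = PIdl"
  unfolding primeX_def by auto

lemma primeY_empty: "primeY {} = PFilt"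
  unfolding primeY_def by auto

lemma primeX_Un: "primeX (U \<union> V) = primeX U \<inter> primeX V"
  unfolding primeX_def by auto

lemma primeY_Un: "primeY (U \<union> V) = primeY U \<inter> primeY V"
  unfolding primeY_def by auto

lemma primeX_Xa: "primeX (Xa a) = Ya (a::'a::bounded_lattice)"
proof (cases "a = bot")
  case True
  have "Xa a = {}" unfolding Xa_def using filt_bot True by auto
  then show ?thesis using True by (simp add: primeX_empty Ya_bot)
next
  case False
  show ?thesis
  proof (intro equalityI subsetI)
    fix y assume y: "y \<in> primeX (Xa a)"
    then have yI: "y \<in> PIdl" unfolding primeX_def by auto
    have "{b. a \<le> b} \<in> Xa a" using princ_filt[OF False] unfolding Xa_def by auto
    with y have "{b. a \<le> b} \<inter> y \<noteq> {}" unfolding primeX_def rel_def by blast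
    then obtain b where "a \<le> b" "b \<in> y" by blast
    then have "a \<in> y" using idl_down[OF yI] by auto
    with yI show "y \<in> Ya a" unfolding Ya_def by auto
  qed (auto simp: primeX_def Ya_def Xa_def rel_def)
qed

lemma primeY_Ya: "primeY (Ya a) = Xa (a::'a::bounded_lattice)"
proof (cases "a = top")
  case True
  have "Ya a = {}" unfolding Ya_def using idl_top True by auto
  then show ?thesis using True by (simp add: primeY_empty Xa_top)
next
  case False
  show ?thesis
  proof (intro equalityI subsetI)
    fix x assume x: "x \<in> primeY (Ya a)"
    then have xF: "x \<in> PFilt" unfolding primeY_def by auto
    have "{b. b \<le> a} \<in> Ya a" using princ_idl[OF False] unfolding Ya_def by auto
    with x have "x \<inter> {b. b \<le> a} \<noteq> {}" unfolding primeY_def rel_def by blast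
    then obtain b where "b \<le> a" "b \<in> x" by blast
    then have "a \<in> x" using filt_up[OF xF] by auto
    with xF show "x \<in> Xa a" unfolding Xa_def by auto
  qed (auto simp: primeY_def Ya_def Xa_def rel_def)
qed

lemma Xa_le: "Xa a \<subseteq> Xa b \<longleftrightarrow> (a::'a::bounded_lattice) \<le> b"
proof
  assume h: "Xa a \<subseteq> Xa b"
  show "a \<le> b"
  proof (cases "a = bot")
    case False
    have "{c. a \<le> c} \<in> Xa a" using princ_filt[OF False] unfolding Xa_def by auto
    with h show ?thesis unfolding Xa_def by auto
  qed simp
qed (auto simp: Xa_def intro: filt_up)

lemma Ya_le: "Ya a \<subseteq> Ya b \<longleftrightarrow> (b::'a::bounded_lattice) \<le> a"
proof
  assume h: "Ya a \<subseteq> Ya b"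
  show "b \<le> a"
  proof (cases "a = top")
    case False
    have "{c. c \<le> a} \<in> Ya a" using princ_idl[OF False] unfolding Ya_def by auto
    with h show ?thesis unfolding Ya_def by auto
  qed simp
qed (auto simp: Ya_def intro: idl_down)

lemma Xa_inj: "Xa a = Xa b \<Longrightarrow> a = (b::'a::bounded_lattice)"
  by (metis Xa_le order_antisym order_refl)

lemma Ya_inj: "Ya a = Ya b \<Longrightarrow> a = (b::'a::bounded_lattice)"
  by (metis Ya_le order_antisym order_refl)

lemma openX_local:
  assumes "openin (TopX::'a::bounded_lattice set topology) U" "x \<in> U"
  shows "\<exists>b. x \<in> Xa b \<and> Xa b \<subseteq> U"
proof -
  have "generate_topology_on (BX::'a set set set) U"
    using assms(1) unfolding TopX_def by (simp add: openin_topology_generated_by_iff)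
  then show ?thesis using assms(2)
  proof (induction arbitrary: x rule: generate_topology_on.induct)
    case (Int a b)
    then obtain b1 b2 where "x \<in> Xa b1" "Xa b1 \<subseteq> a" "x \<in> Xa b2" "Xa b2 \<subseteq> b" by blast
    then show ?case by (intro exI[of _ "inf b1 b2"]) (auto simp: Xa_inf)
  next
    case (UN K)
    then show ?case by blast
  next
    case (Basis s)
    then show ?case unfolding BX_def by auto
  qed simp
qed

lemma openY_local:
  assumes "openin (TopY::'a::bounded_lattice set topology) U" "x \<in> U"
  shows "\<exists>b. x \<in> Ya b \<and> Ya b \<subseteq> U"
proof -
  have "generate_topology_on (CY::'a set set set) U"
    using assms(1) unfolding TopY_def by (simp add: openin_topology_generated_by_iff)
  then show ?thesis using assms(2)
  proof (induction arbitrary: x rule: generate_topology_on.induct)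
    case (Int a b)
    then obtain b1 b2 where "x \<in> Ya b1" "Ya b1 \<subseteq> a" "x \<in> Ya b2" "Ya b2 \<subseteq> b" by blast
    then show ?case by (intro exI[of _ "sup b1 b2"]) (auto simp: Ya_sup)
  next
    case (UN K)
    then show ?case by blast
  next
    case (Basis s)
    then show ?case unfolding CY_def by auto
  qed simp
qed

lemma openX_up:
  assumes "openin (TopX::'a::bounded_lattice set topology) U" "F \<in> U" "F \<subseteq> G" "G \<in> PFilt"
  shows "G \<in> U"
proof -
  have "generate_topology_on (BX::'a set set set) U"
    using assms(1) unfolding TopX_def by (simp add: openin_topology_generated_by_iff)
  then show ?thesis using assms(2-)
    by (induction rule: generate_topology_on.induct) (auto simp: BX_def Xa_def)
qed

lemma openY_up:
  assumes "openin (TopY::'a::bounded_lattice set topology) U" "F \<in> U" "F \<subseteq> G" "G \<in> PIdl"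
  shows "G \<in> U"
proof -
  have "generate_topology_on (CY::'a set set set) U"
    using assms(1) unfolding TopY_def by (simp add: openin_topology_generated_by_iff)
  then show ?thesis using assms(2-)
    by (induction rule: generate_topology_on.induct) (auto simp: CY_def Ya_def)
qed

lemma openX_Xa: "openin TopX (Xa (a::'a::bounded_lattice))"
  unfolding TopX_def by (rule topology_generated_by_Basis) (simp add: BX_def)

lemma openY_Ya: "openin TopY (Ya (a::'a::bounded_lattice))"
  unfolding TopY_def by (rule topology_generated_by_Basis) (simp add: CY_def)

lemma compactX_Xa: "compactin TopX (Xa (a::'a::bounded_lattice))"
  unfolding compactin_def
proof (intro conjI allI impI)
  show "Xa a \<subseteq> topspace TopX" unfolding TopX_def BX_def by auto
  fix \<U> assume h: "(\<forall>U\<in>\<U>. openin TopX U) \<and> Xa a \<subseteq> \<Union>\<U>"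
  show "\<exists>\<F>. finite \<F> \<and> \<F> \<subseteq> \<U> \<and> Xa a \<subseteq> \<Union>\<F>"
  proof (cases "a = bot")
    case True
    then have "Xa a = {}" unfolding Xa_def using filt_bot by auto
    then show ?thesis by auto
  next
    case False
    have p: "{c. a \<le> c} \<in> Xa a" using princ_filt[OF False] unfolding Xa_def by auto
    with h obtain U where U: "U \<in> \<U>" "{c. a \<le> c} \<in> U" by blast
    have "Xa a \<subseteq> U"
    proof
      fix x assume "x \<in> Xa a"
      then have "x \<in> PFilt" "{c. a \<le> c} \<subseteq> x" unfolding Xa_def by (auto intro: filt_up)
      then show "x \<in> U" using openX_up[of U] h U by blast
    qed
    then show ?thesis using U by (intro exI[of _ "{U}"]) auto
  qed
qed

lemma compactY_Ya: "compactin TopY (Ya (a::'a::bounded_lattice))"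
  unfolding compactin_def
proof (intro conjI allI impI)
  show "Ya a \<subseteq> topspace TopY" unfolding TopY_def CY_def by auto
  fix \<U> assume h: "(\<forall>U\<in>\<U>. openin TopY U) \<and> Ya a \<subseteq> \<Union>\<U>"
  show "\<exists>\<F>. finite \<F> \<and> \<F> \<subseteq> \<U> \<and> Ya a \<subseteq> \<Union>\<F>"
  proof (cases "a = top")
    case True
    then have "Ya a = {}" unfolding Ya_def using idl_top by auto
    then show ?thesis by auto
  next
    case False
    have p: "{c. c \<le> a} \<in> Ya a" using princ_idl[OF False] unfolding Ya_def by auto
    with h obtain U where U: "U \<in> \<U>" "{c. c \<le> a} \<in> U" by blast
    have "Ya a \<subseteq> U"
    proof
      fix x assume "x \<in> Ya a"
      then have "x \<in> PIdl" "{c. c \<le> a} \<subseteq> x" unfolding Ya_def by (auto intro: idl_down)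
      then show "x \<in> U" using openY_up[of U] h U by blast
    qed
    then show ?thesis using U by (intro exI[of _ "{U}"]) auto
  qed
qed

lemma finite_union_X:
  "finite F \<Longrightarrow> F \<subseteq> (BX::'a::bounded_lattice set set set) \<Longrightarrow> \<exists>c. primeX (\<Union>F) = Ya c"
proof (induction F rule: finite_induct)
  case empty
  show ?case by (rule exI[of _ bot]) (simp add: primeX_empty Ya_bot)
next
  case (insert A F)
  then obtain c where c: "primeX (\<Union>F) = Ya c" by auto
  from insert obtain a where a: "A = Xa a" unfolding BX_def by auto
  have "primeX (\<Union>(insert A F)) = Ya a \<inter> Ya c"
    using primeX_Un[of A "\<Union>F"] c a primeX_Xa[of a] by simp
  then show ?case using Ya_sup[of a c] by auto
qed

lemma finite_union_Y:
  "finite F \<Longrightarrow> F \<subseteq> (CY::'a::bounded_lattice set set set) \<Longrightarrow> \<exists>c. primeY (\<Union>F) = Xa c"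
proof (induction F rule: finite_induct)
  case empty
  show ?case by (rule exI[of _ top]) (simp add: primeY_empty Xa_top)
next
  case (insert A F)
  then obtain c where c: "primeY (\<Union>F) = Xa c" by auto
  from insert obtain a where a: "A = Ya a" unfolding CY_def by auto
  have "primeY (\<Union>(insert A F)) = Xa a \<inter> Xa c"
    using primeY_Un[of A "\<Union>F"] c a primeY_Ya[of a] by simp
  then show ?case using Xa_inf[of a c] by auto
qed

lemma charX:
  "(BX :: 'a::bounded_lattice set set set) = {A. openin TopX A \<and> compactin TopX A \<and> stableX A}"
proof (intro equalityI subsetI)
  fix A :: "'a set set" assume "A \<in> BX"
  then obtain a where a: "A = Xa a" unfolding BX_def by auto
  have "stableX A" unfolding stableX_def a
    by (simp add: primeX_Xa primeY_Ya) (auto simp: Xa_def)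
  then show "A \<in> {A. openin TopX A \<and> compactin TopX A \<and> stableX A}"
    using a openX_Xa compactX_Xa by auto
next
  fix A :: "'a set set" assume "A \<in> {A. openin TopX A \<and> compactin TopX A \<and> stableX A}"
  then have o: "openin TopX A" and c: "compactin TopX A" and s: "stableX A" by auto
  let ?U = "{Xa b | b. Xa b \<subseteq> A}"
  have cov: "A \<subseteq> \<Union>?U"
  proof
    fix x assume "x \<in> A"
    then obtain b where "x \<in> Xa b" "Xa b \<subseteq> A" using openX_local[OF o] by blast
    then show "x \<in> \<Union>?U" by blast
  qed
  have op: "\<forall>U\<in>?U. openin TopX U" using openX_Xa by auto
  have cc: "\<forall>\<U>. (\<forall>U\<in>\<U>. openin TopX U) \<and> A \<subseteq> \<Union>\<U> \<longrightarrow> (\<exists>F. finite F \<and> F \<subseteq> \<U> \<and> A \<subseteq> \<Union>F)"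
    using c by (simp add: compactin_def)
  have "\<exists>F. finite F \<and> F \<subseteq> ?U \<and> A \<subseteq> \<Union>F"
    using mp[OF spec[OF cc, of ?U] conjI[OF op cov]] .
  then obtain F where F: "finite F" "F \<subseteq> ?U" "A \<subseteq> \<Union>F" by blast
  have "\<Union>F \<subseteq> A" using F(2) by auto
  with F(3) have eq: "A = \<Union>F" by (rule equalityI)
  have FB: "F \<subseteq> BX" using F(2) unfolding BX_def by auto
  obtain c where "primeX (\<Union>F) = Ya c" using finite_union_X[OF F(1) FB] by blast
  then have "A = Xa c" using s eq primeY_Ya[of c] unfolding stableX_def by simp
  then show "A \<in> BX" unfolding BX_def by auto
qed

lemma charY:
  "(CY :: 'a::bounded_lattice set set set) = {B. openin TopY B \<and> compactin TopY B \<and> costableY B}"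
proof (intro equalityI subsetI)
  fix A :: "'a set set" assume "A \<in> CY"
  then obtain a where a: "A = Ya a" unfolding CY_def by auto
  have "costableY A" unfolding costableY_def a
    by (simp add: primeX_Xa primeY_Ya) (auto simp: Ya_def)
  then show "A \<in> {A. openin TopY A \<and> compactin TopY A \<and> costableY A}"
    using a openY_Ya compactY_Ya by auto
next
  fix A :: "'a set set" assume "A \<in> {A. openin TopY A \<and> compactin TopY A \<and> costableY A}"
  then have o: "openin TopY A" and c: "compactin TopY A" and s: "costableY A" by auto
  let ?U = "{Ya b | b. Ya b \<subseteq> A}"
  have cov: "A \<subseteq> \<Union>?U"
  proof
    fix x assume "x \<in> A"
    then obtain b where "x \<in> Ya b" "Ya b \<subseteq> A" using openY_local[OF o] by blast
    then show "x \<in> \<Union>?U" by blast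
  qed
  have op: "\<forall>U\<in>?U. openin TopY U" using openY_Ya by auto
  have cc: "\<forall>\<U>. (\<forall>U\<in>\<U>. openin TopY U) \<and> A \<subseteq> \<Union>\<U> \<longrightarrow> (\<exists>F. finite F \<and> F \<subseteq> \<U> \<and> A \<subseteq> \<Union>F)"
    using c by (simp add: compactin_def)
  have "\<exists>F. finite F \<and> F \<subseteq> ?U \<and> A \<subseteq> \<Union>F"
    using mp[OF spec[OF cc, of ?U] conjI[OF op cov]] .
  then obtain F where F: "finite F" "F \<subseteq> ?U" "A \<subseteq> \<Union>F" by blast
  have "\<Union>F \<subseteq> A" using F(2) by auto
  with F(3) have eq: "A = \<Union>F" by (rule equalityI)
  have FB: "F \<subseteq> CY" using F(2) unfolding CY_def by auto
  obtain c where "primeY (\<Union>F) = Xa c" using finite_union_Y[OF F(1) FB] by blast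
  then have "A = Ya c" using s eq primeX_Xa[of c] unfolding costableY_def by simp
  then show "A \<in> CY" unfolding CY_def by auto
qed

theorem proposition4p4:
  shows "(BX :: 'a::bounded_lattice set set set) =
           {A. openin TopX A \<and> compactin TopX A \<and> stableX A}
    \<and> (CY :: 'a set set set) =
           {B. openin TopY B \<and> compactin TopY B \<and> costableY B}
    \<and> (\<forall>a::'a. primeX (Xa a) = Ya a)
    \<and> bij_betw primeX (BX :: 'a set set set) CY
    \<and> (\<forall>A1\<in>(BX :: 'a set set set). \<forall>A2\<in>BX.
           A1 \<subseteq> A2 \<longleftrightarrow> primeX A2 \<subseteq> primeX A1)
    \<and> (PFilt :: 'a set set) \<in> BX \<and> primeY (primeX {}) \<in> (BX :: 'a set set set)
    \<and> (\<forall>A1\<in>(BX :: 'a set set set). \<forall>A2\<in>BX.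
              A1 \<inter> A2 \<in> BX \<and> primeY (primeX (A1 \<union> A2)) \<in> BX)
    \<and> (PIdl :: 'a set set) \<in> CY \<and> primeX (primeY {}) \<in> (CY :: 'a set set set)
    \<and> (\<forall>B1\<in>(CY :: 'a set set set). \<forall>B2\<in>CY.
              B1 \<inter> B2 \<in> CY \<and> primeX (primeY (B1 \<union> B2)) \<in> CY)"
proof (intro conjI)
  show "(BX :: 'a set set set) = {A. openin TopX A \<and> compactin TopX A \<and> stableX A}"
    by (rule charX)
  show "(CY :: 'a set set set) = {B. openin TopY B \<and> compactin TopY B \<and> costableY B}"
    by (rule charY)
  show "\<forall>a::'a. primeX (Xa a) = Ya a" using primeX_Xa by blast
  show "bij_betw primeX (BX :: 'a set set set) CY"
    unfolding bij_betw_def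
  proof
    show "inj_on primeX (BX :: 'a set set set)"
    proof (rule inj_onI)
      fix A1 A2 :: "'a set set" assume "A1 \<in> BX" "A2 \<in> BX" "primeX A1 = primeX A2"
      then obtain a b where "A1 = Xa a" "A2 = Xa b" "Ya a = Ya b"
        unfolding BX_def by (auto simp: primeX_Xa)
      then show "A1 = A2" using Ya_inj by blast
    qed
    show "primeX ` (BX :: 'a set set set) = CY"
      unfolding BX_def CY_def using primeX_Xa by (auto simp: image_iff)
  qed
  show "\<forall>A1\<in>(BX :: 'a set set set). \<forall>A2\<in>BX. A1 \<subseteq> A2 \<longleftrightarrow> primeX A2 \<subseteq> primeX A1"
  proof (intro ballI)
    fix A1 A2 :: "'a set set" assume "A1 \<in> BX" "A2 \<in> BX"
    then obtain a b where "A1 = Xa a" "A2 = Xa b" unfolding BX_def by auto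
    then show "A1 \<subseteq> A2 \<longleftrightarrow> primeX A2 \<subseteq> primeX A1"
      by (simp add: primeX_Xa Xa_le Ya_le)
  qed
  show "(PFilt :: 'a set set) \<in> BX" unfolding BX_def using rangeI[of Xa top] by (simp add: Xa_top)
  show "primeY (primeX {}) \<in> (BX :: 'a set set set)"
    unfolding BX_def using rangeI[of Xa bot] by (simp add: primeX_empty Ya_bot[symmetric] primeY_Ya)
  show "\<forall>A1\<in>(BX :: 'a set set set). \<forall>A2\<in>BX.
              A1 \<inter> A2 \<in> BX \<and> primeY (primeX (A1 \<union> A2)) \<in> BX"
  proof (intro ballI)
    fix A1 A2 :: "'a set set" assume "A1 \<in> BX" "A2 \<in> BX"
    then obtain a b where ab: "A1 = Xa a" "A2 = Xa b" unfolding BX_def by auto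
    have "A1 \<inter> A2 = Xa (inf a b)" using ab Xa_inf[of a b] by simp
    moreover have "primeY (primeX (A1 \<union> A2)) = Xa (sup a b)"
      using ab primeX_Un[of A1 A2] primeX_Xa[of a] primeX_Xa[of b] Ya_sup[of a b] primeY_Ya[of "sup a b"]
      by simp
    ultimately show "A1 \<inter> A2 \<in> BX \<and> primeY (primeX (A1 \<union> A2)) \<in> BX"
      unfolding BX_def by simp
  qed
  show "(PIdl :: 'a set set) \<in> CY" unfolding CY_def using rangeI[of Ya bot] by (simp add: Ya_bot)
  show "primeX (primeY {}) \<in> (CY :: 'a set set set)"
    unfolding CY_def using rangeI[of Ya top] by (simp add: primeY_empty Xa_top[symmetric] primeX_Xa)
  show "\<forall>B1\<in>(CY :: 'a set set set). \<forall>B2\<in>CY.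
              B1 \<inter> B2 \<in> CY \<and> primeX (primeY (B1 \<union> B2)) \<in> CY"
  proof (intro ballI)
    fix A1 A2 :: "'a set set" assume "A1 \<in> CY" "A2 \<in> CY"
    then obtain a b where ab: "A1 = Ya a" "A2 = Ya b" unfolding CY_def by auto
    have "A1 \<inter> A2 = Ya (sup a b)" using ab Ya_sup[of a b] by simp
    moreover have "primeX (primeY (A1 \<union> A2)) = Ya (inf a b)"
      using ab primeY_Un[of A1 A2] primeY_Ya[of a] primeY_Ya[of b] Xa_inf[of a b] primeX_Xa[of "inf a b"]
      by simp
    ultimately show "A1 \<inter> A2 \<in> CY \<and> primeX (primeY (A1 \<union> A2)) \<in> CY"
      unfolding CY_def by simp
  qed
qed

end
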